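(* For any vector $\vec\lambda=(\lambda_1,\dots,\lambda_n)\in\mathbb{R}^n$ and any $\vec a=(a_1,\dots,a_n)\in\mathbb{R}^n$ with $|\vec a|=1$, $$\Big|\sum_{i=1}^n\lambda_i^2a_i^2-\Big(\sum_{i=1}^n\lambda_i\Big)\Big(\sum_{j=1}^n\lambda_ja_j^2\Big)-\frac12\Big[\sum_{i=1}^n\lambda_i^2-\Big(\sum_{i=1}^n\lambda_i\Big)^2\Big]\Big|\le\frac{n-2}{2}\Big[\sum_{i=1}^n\lambda_i^2-\sum_{i=1}^n\lambda_i^2a_i^2\Big].$$ *)

theory Defs
  imports "HOL-Analysis.Analysis"
begin

end

theory Submission
  imports Defs
begin

lemma offsum: assumes "finite S" "i \<in> S"
  shows "(\<Sum>j\<in>S. if i = j then 0 else f j) = sum f S - (f i :: real)"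
proof -
  have "(\<Sum>j\<in>S. if i = j then 0 else f j) = (\<Sum>j\<in>S. f j - (if i = j then f j else 0))"
    by (rule sum.cong) auto
  also have "\<dots> = sum f S - f i" using assms by (simp add: sum_subtractf)
  finally show ?thesis .
qed

lemma key:
  fixes l w :: "'a \<Rightarrow> real"
  assumes fin: "finite S" and w0: "\<And>i. i\<in>S \<Longrightarrow> w i \<ge> 0" and w1: "sum w S = 1"
  shows "\<bar>(\<Sum>i\<in>S. (l i)^2 * w i) - (\<Sum>i\<in>S. l i) * (\<Sum>j\<in>S. l j * w j)
          - (1/2) * ((\<Sum>i\<in>S. (l i)^2) - (\<Sum>i\<in>S. l i)^2)\<bar>
        \<le> ((real (card S) - 2) / 2) * ((\<Sum>i\<in>S. (l i)^2) - (\<Sum>i\<in>S. (l i)^2 * w i))"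
proof -
  define c where "c i j = 1 - w i - w j" for i j
  have c0: "c i j \<ge> 0" if "i\<in>S" "j\<in>S" "i\<noteq>j" for i j
  proof -
    have "w i + w j = sum w {i,j}" using that by simp
    also have "\<dots> \<le> sum w S" by (rule sum_mono2) (use fin that w0 in auto)
    finally show ?thesis using w1 by (simp add: c_def)
  qed
  define T where "T i j = (if i = j then 0 else l i * l j * c i j)" for i j
  define B where "B i j = (if i = j then 0 else (l i)^2 * c i j)" for i j
  define L where "L = (\<Sum>i\<in>S. l i)"
  define M where "M = (\<Sum>j\<in>S. l j * w j)"
  have ET: "(\<Sum>i\<in>S. \<Sum>j\<in>S. T i j) = 2 * ((\<Sum>i\<in>S. (l i)^2 * w i) - (\<Sum>i\<in>S. l i) * (\<Sum>j\<in>S. l j * w j)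
          - (1/2) * ((\<Sum>i\<in>S. (l i)^2) - (\<Sum>i\<in>S. l i)^2))"
  proof -
    have "(\<Sum>i\<in>S. \<Sum>j\<in>S. T i j) = (\<Sum>i\<in>S. (\<Sum>j\<in>S. l i * l j * c i j) - l i * l i * c i i)"
      unfolding T_def using fin by (intro sum.cong refl offsum) auto
    also have "\<dots> = (\<Sum>i\<in>S. l i * L - l i * w i * L - l i * M - (l i)^2 + 2 * ((l i)^2 * w i))"
      by (intro sum.cong refl) (simp add: c_def L_def M_def sum_distrib_left sum_subtractf sum.distrib algebra_simps power2_eq_square)
    also have "\<dots> = L * L - M * L - L * M - (\<Sum>i\<in>S. (l i)^2) + 2 * (\<Sum>i\<in>S. (l i)^2 * w i)"
    proof -
      have e1: "(\<Sum>i\<in>S. l i * L) = L * L" by (simp add: L_def sum_distrib_right)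
      have e2: "(\<Sum>i\<in>S. l i * w i * L) = M * L" by (simp add: M_def sum_distrib_right)
      have e3: "(\<Sum>i\<in>S. l i * M) = L * M" by (simp add: L_def sum_distrib_right)
      have e4: "(\<Sum>i\<in>S. 2 * ((l i)^2 * w i)) = 2 * (\<Sum>i\<in>S. (l i)^2 * w i)" by (simp add: sum_distrib_left)
      show ?thesis by (simp only: sum_subtractf sum.distrib e1 e2 e3 e4)
    qed
    also have "\<dots> = 2 * ((\<Sum>i\<in>S. (l i)^2 * w i) - (\<Sum>i\<in>S. l i) * (\<Sum>j\<in>S. l j * w j)
          - (1/2) * ((\<Sum>i\<in>S. (l i)^2) - (\<Sum>i\<in>S. l i)^2))"
      unfolding L_def[symmetric] M_def[symmetric] by (simp add: algebra_simps power2_eq_square)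
    finally show ?thesis .
  qed
  have EB: "(\<Sum>i\<in>S. \<Sum>j\<in>S. B i j) = (real (card S) - 2) * ((\<Sum>i\<in>S. (l i)^2) - (\<Sum>i\<in>S. (l i)^2 * w i))"
  proof -
    have "(\<Sum>i\<in>S. \<Sum>j\<in>S. B i j) = (\<Sum>i\<in>S. (\<Sum>j\<in>S. (l i)^2 * c i j) - (l i)^2 * c i i)"
      unfolding B_def using fin by (intro sum.cong refl offsum) auto
    also have "\<dots> = (\<Sum>i\<in>S. (real (card S) - 2) * ((l i)^2 - (l i)^2 * w i))"
    proof (intro sum.cong refl)
      fix i assume "i \<in> S"
      have h1: "(\<Sum>j\<in>S. c i j) = real (card S) * (1 - w i) - 1"
        unfolding c_def by (simp add: sum_subtractf sum.distrib w1 algebra_simps)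
      have h2: "(\<Sum>j\<in>S. (l i)^2 * c i j) = (l i)^2 * (\<Sum>j\<in>S. c i j)"
        by (simp add: sum_distrib_left)
      have h3: "c i i = 1 - 2 * w i" by (simp add: c_def)
      show "(\<Sum>j\<in>S. (l i)^2 * c i j) - (l i)^2 * c i i = (real (card S) - 2) * ((l i)^2 - (l i)^2 * w i)"
        unfolding h2 h1 h3 by (simp add: algebra_simps)
    qed
    also have "\<dots> = (real (card S) - 2) * ((\<Sum>i\<in>S. (l i)^2) - (\<Sum>i\<in>S. (l i)^2 * w i))"
      by (subst sum_distrib_left[symmetric]) (simp add: sum_subtractf)
    finally show ?thesis .
  qed
  have sym: "(\<Sum>i\<in>S. \<Sum>j\<in>S. B j i) = (\<Sum>i\<in>S. \<Sum>j\<in>S. B i j)"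
    by (rule sum.swap)
  have pt: "\<bar>T i j\<bar> \<le> (B i j + B j i) / 2" if "i\<in>S" "j\<in>S" for i j
  proof (cases "i = j")
    case False
    have cs: "c j i = c i j" by (simp add: c_def)
    have "\<bar>l i * l j\<bar> \<le> ((l i)^2 + (l j)^2) / 2"
    proof -
      have "0 \<le> (\<bar>l i\<bar> - \<bar>l j\<bar>)^2" by simp
      thus ?thesis by (simp add: power2_diff abs_mult)
    qed
    hence "\<bar>l i * l j\<bar> * c i j \<le> ((l i)^2 + (l j)^2) / 2 * c i j"
      using c0[OF that False] by (rule mult_right_mono)
    thus ?thesis using False c0[OF that False] cs
      by (simp add: T_def B_def abs_mult algebra_simps add_divide_distrib)
  qed (simp add: T_def B_def)
  have "\<bar>\<Sum>i\<in>S. \<Sum>j\<in>S. T i j\<bar> \<le> (\<Sum>i\<in>S. \<Sum>j\<in>S. \<bar>T i j\<bar>)"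
    by (rule order_trans[OF sum_abs]) (intro sum_mono sum_abs)
  also have "\<dots> \<le> (\<Sum>i\<in>S. \<Sum>j\<in>S. (B i j + B j i) / 2)"
    by (intro sum_mono pt)
  also have "\<dots> = ((\<Sum>i\<in>S. \<Sum>j\<in>S. B i j) + (\<Sum>i\<in>S. \<Sum>j\<in>S. B j i)) / 2"
    by (simp add: sum.distrib add_divide_distrib flip: sum_divide_distrib)
  also have "\<dots> = (\<Sum>i\<in>S. \<Sum>j\<in>S. B i j)" using sym by simp
  finally have fin2: "\<bar>\<Sum>i\<in>S. \<Sum>j\<in>S. T i j\<bar> \<le> (\<Sum>i\<in>S. \<Sum>j\<in>S. B i j)" .
  have gen: "\<And>x c y::real. \<bar>2 * x\<bar> \<le> c * y \<Longrightarrow> \<bar>x\<bar> \<le> (c / 2) * y" by simp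
  show ?thesis using gen[OF fin2[unfolded ET EB]] .
qed
theorem lemma2p2:
  fixes lam a :: "real ^ 'n"
  assumes "norm a = 1"
  shows "\<bar>(\<Sum>i\<in>UNIV. (lam $ i)^2 * (a $ i)^2)
            - (\<Sum>i\<in>UNIV. lam $ i) * (\<Sum>j\<in>UNIV. lam $ j * (a $ j)^2)
            - (1/2) * ((\<Sum>i\<in>UNIV. (lam $ i)^2) - (\<Sum>i\<in>UNIV. lam $ i)^2)\<bar>
         \<le> ((real CARD('n) - 2) / 2) *
            ((\<Sum>i\<in>UNIV. (lam $ i)^2) - (\<Sum>i\<in>UNIV. (lam $ i)^2 * (a $ i)^2))"
proof -
  have "(\<Sum>i\<in>UNIV. (a $ i)^2) = (norm a)^2"
    unfolding power2_norm_eq_inner by (simp add: inner_vec_def power2_eq_square)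
  hence w1: "(\<Sum>i\<in>UNIV. (a $ i)^2) = 1" using assms by simp
  show ?thesis
    using key[of UNIV "\<lambda>i. (a $ i)^2" "\<lambda>i. lam $ i"] w1 by simp
qed

end
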